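(* Let $X$ be a topological space, $(Y,d)$ a metric space and $f:X\to Y$ a mapping. Assume that for some integer $n\ge 2$ there are strictly functionally discrete families $\mathcal F_0,\mathcal F_1,\dots,\mathcal F_n$ of subsets of $X$ and mappings $p_k:\mathcal F_k\to Y$, $k\in\{0,\dots,n\}$, such that: (A) $\mathcal F_0$ consists of the single set $X$; (B) for every $k\le n$ and $F\in\mathcal F_k$, $\sup_{x\in F} d(f(x),p_k(F))<\frac{1}{2^{k+2}}$; (C) for every $k<n$ each set of $\mathcal F_{k+1}$ is contained in some set of $\mathcal F_k$; (D) for every $F\in\mathcal F_1$ the points $p_0(X)$ and $p_1(F)$ can be joined by an arc in $Y$; (E) for every $k\in\{1,\dots,n-1\}$ and all $F\in\mathcal F_{k+1}$, $F'\in\mathcal F_k$ with $F\subseteq F'$, the points $p_{k+1}(F)$ and $p_k(F')$ can be joined by an arc of diameter $<\frac{1}{2^{k+2}}$ in $Y$. Then there exists a continuous mapping $g:X\to Y$ such that $d(f(x),g(x))<\frac{1}{2^k}$ for every $k\in\{1,\dots,n\}$ and every $x\in\bigcup\mathcal F_k$.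
   Context: A family $\mathcal A$ of subsets of $X$ is strictly functionally discrete if for every $A\in\mathcal A$ there is a continuous $f_A:X\to[0,1]$ with $A\subseteq f_A^{-1}(0)$ such that the family $(f_A^{-1}([0,1)):A\in\mathcal A)$ is discrete (every point of $X$ has a neighborhood meeting at most one member). $\bigcup\mathcal F_k$ denotes the union of all members of $\mathcal F_k$. Points $a,b$ are joined by an arc in $Y$ if there is a continuous $\gamma:[0,1]\to Y$ with $\gamma(0)=a$, $\gamma(1)=b$; its diameter is that of $\gamma([0,1])$. *)

theory Defs
  imports "HOL-Analysis.Analysis"
begin

text \<open>Strictly functionally discrete family of subsets of a topological space (the space is
the type 'a, i.e. X = UNIV).\<close>
definition strictly_functionally_discrete :: "'a::topological_space set set \<Rightarrow> bool" where
  "strictly_functionally_discrete \<A> \<longleftrightarrow>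
     (\<exists>\<phi> :: 'a set \<Rightarrow> 'a \<Rightarrow> real.
        (\<forall>A\<in>\<A>. continuous_on UNIV (\<phi> A) \<and> (\<forall>x. \<phi> A x \<in> {0..1}) \<and> A \<subseteq> \<phi> A -` {0}) \<and>
        (\<forall>x. \<exists>U. open U \<and> x \<in> U \<and>
           (\<forall>A\<in>\<A>. \<forall>B\<in>\<A>. U \<inter> \<phi> A -` {0..<1} \<noteq> {} \<longrightarrow> U \<inter> \<phi> B -` {0..<1} \<noteq> {} \<longrightarrow> A = B)))"

definition joined_by_arc :: "'b::topological_space \<Rightarrow> 'b \<Rightarrow> bool" where
  "joined_by_arc a b \<longleftrightarrow> (\<exists>\<gamma>. path \<gamma> \<and> pathstart \<gamma> = a \<and> pathfinish \<gamma> = b)"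

definition joined_by_arc_diam_lt :: "'b::metric_space \<Rightarrow> 'b \<Rightarrow> real \<Rightarrow> bool" where
  "joined_by_arc_diam_lt a b r \<longleftrightarrow>
     (\<exists>\<gamma>. path \<gamma> \<and> pathstart \<gamma> = a \<and> pathfinish \<gamma> = b \<and> diameter (path_image \<gamma>) < r)"

end

theory Submission
  imports Defs
begin

locale cons5 =
  fixes f :: "'a::topological_space \<Rightarrow> 'b::metric_space"
    and n :: nat
    and F :: "nat \<Rightarrow> 'a set set"
    and p :: "nat \<Rightarrow> 'a set \<Rightarrow> 'b"
    and phi :: "nat \<Rightarrow> 'a set \<Rightarrow> 'a \<Rightarrow> real"
  assumes n2: "n \<ge> 2"
    and phiP: "\<forall>k\<le>n. \<forall>A\<in>F k. continuous_on UNIV (phi k A) \<and> (\<forall>x. phi k A x \<in> {0..1}) \<and> A \<subseteq> phi k A -` {0}"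
    and disc: "\<forall>k\<le>n. \<forall>x. \<exists>U. open U \<and> x \<in> U \<and>
           (\<forall>A\<in>F k. \<forall>B\<in>F k. U \<inter> phi k A -` {0..<1} \<noteq> {} \<longrightarrow> U \<inter> phi k B -` {0..<1} \<noteq> {} \<longrightarrow> A = B)"
    and A: "F 0 = {UNIV}"
    and C: "\<forall>k<n. \<forall>S\<in>F (Suc k). \<exists>S'\<in>F k. S \<subseteq> S'"
    and D: "\<forall>S\<in>F 1. joined_by_arc (p 0 UNIV) (p 1 S)"
    and E: "\<forall>k\<in>{1..n-1}. \<forall>S\<in>F (Suc k). \<forall>S'\<in>F k. S \<subseteq> S' \<longrightarrow>
              joined_by_arc_diam_lt (p (Suc k) S) (p k S') (1 / 2 ^ (k + 2))"
begin

definition par :: "nat \<Rightarrow> 'a set \<Rightarrow> 'a set" where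
  "par k S = (SOME S'. S' \<in> F k \<and> S \<subseteq> S')"

fun psi :: "nat \<Rightarrow> 'a set \<Rightarrow> 'a \<Rightarrow> real" where
  "psi 0 S x = 0"
| "psi (Suc k) S x = max (phi (Suc k) S x) (min 1 (2 * psi k (par k S) x))"

definition gam :: "nat \<Rightarrow> 'a set \<Rightarrow> real \<Rightarrow> 'b" where
  "gam k S = (SOME \<gamma>. path \<gamma> \<and> pathstart \<gamma> = p k (par k S) \<and> pathfinish \<gamma> = p (Suc k) S \<and>
      (1 \<le> k \<longrightarrow> diameter (path_image \<gamma>) < 1 / 2 ^ (k + 2)))"

fun g :: "nat \<Rightarrow> 'a \<Rightarrow> 'b" where
  "g 0 x = p 0 UNIV"
| "g (Suc k) x = (if \<exists>S\<in>F (Suc k). psi (Suc k) S x < 1 then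
     gam k (SOME S. S \<in> F (Suc k) \<and> psi (Suc k) S x < 1)
       (min 1 (2 - 2 * psi (Suc k) (SOME S. S \<in> F (Suc k) \<and> psi (Suc k) S x < 1) x))
     else g k x)"

declare g.simps[simp del]

lemma par_prop: assumes "k < n" "S \<in> F (Suc k)" shows "par k S \<in> F k \<and> S \<subseteq> par k S"
proof -
  have "\<exists>S'. S' \<in> F k \<and> S \<subseteq> S'" using C assms by blast
  then show ?thesis unfolding par_def by (rule someI_ex)
qed

lemma par0: assumes "S \<in> F 1" shows "par 0 S = UNIV"
  using par_prop[of 0 S] assms n2 A by auto

lemma gam_prop: assumes "k < n" "S \<in> F (Suc k)"
  shows "path (gam k S) \<and> pathstart (gam k S) = p k (par k S) \<and> pathfinish (gam k S) = p (Suc k) S \<and>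
      (1 \<le> k \<longrightarrow> diameter (path_image (gam k S)) < 1 / 2 ^ (k + 2))"
proof -
  have "\<exists>\<gamma>. path \<gamma> \<and> pathstart \<gamma> = p k (par k S) \<and> pathfinish \<gamma> = p (Suc k) S \<and>
      (1 \<le> k \<longrightarrow> diameter (path_image \<gamma>) < 1 / 2 ^ (k + 2))"
  proof (cases "k = 0")
    case True
    have S1: "S \<in> F 1" using assms True by simp
    have "joined_by_arc (p 0 UNIV) (p 1 S)" using D S1 by blast
    then obtain \<gamma> where "path \<gamma>" "pathstart \<gamma> = p 0 UNIV" "pathfinish \<gamma> = p 1 S"
      unfolding joined_by_arc_def by blast
    moreover have "par 0 S = UNIV" using par0 S1 by blast
    ultimately show ?thesis using True by (intro exI[of _ \<gamma>]) simp
  next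
    case False
    then have k1: "k \<in> {1..n-1}" using assms by auto
    have pp: "par k S \<in> F k \<and> S \<subseteq> par k S" using par_prop[OF assms] .
    have "joined_by_arc_diam_lt (p (Suc k) S) (p k (par k S)) (1 / 2 ^ (k + 2))"
      using E k1 assms(2) pp by blast
    then obtain \<gamma> where "path \<gamma>" "pathstart \<gamma> = p (Suc k) S" "pathfinish \<gamma> = p k (par k S)"
      "diameter (path_image \<gamma>) < 1 / 2 ^ (k + 2)"
      unfolding joined_by_arc_diam_lt_def by blast
    then show ?thesis by (intro exI[of _ "reversepath \<gamma>"]) simp
  qed
  then show ?thesis unfolding gam_def by (rule someI_ex)
qed

lemma psi_props: "k \<le> n \<Longrightarrow> S \<in> F k \<Longrightarrow> continuous_on UNIV (psi k S) \<and> (\<forall>x. 0 \<le> psi k S x \<and> psi k S x \<le> 1)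
   \<and> (\<forall>x\<in>S. psi k S x = 0)"
proof (induction k arbitrary: S)
  case 0
  then show ?case by simp
next
  case (Suc k)
  then have pp: "par k S \<in> F k \<and> S \<subseteq> par k S" using par_prop by auto
  then have IH: "continuous_on UNIV (psi k (par k S)) \<and> (\<forall>x. 0 \<le> psi k (par k S) x \<and> psi k (par k S) x \<le> 1)
   \<and> (\<forall>x\<in>par k S. psi k (par k S) x = 0)" using Suc by auto
  have ph: "continuous_on UNIV (phi (Suc k) S) \<and> (\<forall>x. phi (Suc k) S x \<in> {0..1}) \<and> S \<subseteq> phi (Suc k) S -` {0}"
    using phiP Suc.prems by blast
  have "continuous_on UNIV (psi (Suc k) S)"
    unfolding psi.simps using IH ph by (intro continuous_intros) auto
  moreover have "\<forall>x. 0 \<le> psi (Suc k) S x \<and> psi (Suc k) S x \<le> 1"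
  proof
    fix x
    have "0 \<le> phi (Suc k) S x" "phi (Suc k) S x \<le> 1" "0 \<le> psi k (par k S) x" using IH ph by auto
    then show "0 \<le> psi (Suc k) S x \<and> psi (Suc k) S x \<le> 1" by (simp add: max_def min_def)
  qed
  moreover have "\<forall>x\<in>S. psi (Suc k) S x = 0"
  proof
    fix x assume x: "x \<in> S"
    then have "phi (Suc k) S x = 0" "psi k (par k S) x = 0" using IH ph pp by auto
    then show "psi (Suc k) S x = 0" by simp
  qed
  ultimately show ?case by blast
qed

lemma phi_le_psi: "phi (Suc k) S x \<le> psi (Suc k) S x" by simp

declare psi.simps(2)[simp del]

lemma disc_psi: assumes "k \<le> n" shows "\<exists>U. open U \<and> x \<in> U \<and>
   (\<forall>A\<in>F k. \<forall>B\<in>F k. U \<inter> {y. psi k A y < 1} \<noteq> {} \<longrightarrow> U \<inter> {y. psi k B y < 1} \<noteq> {} \<longrightarrow> A = B)"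
proof (cases k)
  case 0
  have "\<forall>A\<in>F k. \<forall>B\<in>F k. A = B" using A 0 by simp
  then show ?thesis by (intro exI[of _ UNIV]) simp
next
  case (Suc j)
  obtain U where U: "open U" "x \<in> U"
    "\<forall>A\<in>F k. \<forall>B\<in>F k. U \<inter> phi k A -` {0..<1} \<noteq> {} \<longrightarrow> U \<inter> phi k B -` {0..<1} \<noteq> {} \<longrightarrow> A = B"
    using disc[rule_format, OF assms, of x] by blast
  have sub: "U \<inter> {y. psi k A y < 1} \<subseteq> U \<inter> phi k A -` {0..<1}" if "A \<in> F k" for A
  proof -
    have r: "\<forall>y. phi k A y \<in> {0..1}" using phiP[rule_format, OF assms that] by blast
    show ?thesis
    proof
      fix y assume y: "y \<in> U \<inter> {y. psi k A y < 1}"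
      have "phi k A y \<le> psi k A y" using phi_le_psi[of j A y] Suc by (simp add: psi.simps)
      then have "phi k A y \<in> {0..<1}" using r y by auto
      then show "y \<in> U \<inter> phi k A -` {0..<1}" using y by simp
    qed
  qed
  have "\<forall>A\<in>F k. \<forall>B\<in>F k. U \<inter> {y. psi k A y < 1} \<noteq> {} \<longrightarrow> U \<inter> {y. psi k B y < 1} \<noteq> {} \<longrightarrow> A = B"
  proof (intro ballI impI)
    fix A B assume AB: "A \<in> F k" "B \<in> F k" "U \<inter> {y. psi k A y < 1} \<noteq> {}" "U \<inter> {y. psi k B y < 1} \<noteq> {}"
    have "U \<inter> phi k A -` {0..<1} \<noteq> {}" using sub[OF AB(1)] AB(3) by blast
    moreover have "U \<inter> phi k B -` {0..<1} \<noteq> {}" using sub[OF AB(2)] AB(4) by blast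
    ultimately show "A = B" using U(3) AB(1,2) by blast
  qed
  then show ?thesis using U(1,2) by blast
qed

lemma sel: assumes "k \<le> n" "S \<in> F k" "psi k S x < 1"
  shows "(SOME S. S \<in> F k \<and> psi k S x < 1) = S"
proof -
  let ?T = "SOME S. S \<in> F k \<and> psi k S x < 1"
  have "\<exists>S. S \<in> F k \<and> psi k S x < 1" using assms by blast
  then have T: "?T \<in> F k \<and> psi k ?T x < 1" by (rule someI_ex)
  obtain U where U: "open U" "x \<in> U"
   "\<forall>A\<in>F k. \<forall>B\<in>F k. U \<inter> {y. psi k A y < 1} \<noteq> {} \<longrightarrow> U \<inter> {y. psi k B y < 1} \<noteq> {} \<longrightarrow> A = B"
    using disc_psi[OF assms(1), of x] by blast
  have 1: "U \<inter> {y. psi k ?T y < 1} \<noteq> {}" using U(2) T by blast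
  have 2: "U \<inter> {y. psi k S y < 1} \<noteq> {}" using U(2) assms(3) by blast
  show ?thesis using U(3)[rule_format, OF conjunct1[OF T] assms(2) 1 2] .
qed

lemma I5: assumes "k \<le> n" "S \<in> F k" "psi k S x \<le> 1/2" shows "g k x = p k S"
proof (cases k)
  case 0
  then show ?thesis using assms A by (simp add: g.simps)
next
  case (Suc j)
  have lt: "psi k S x < 1" using assms(3) by simp
  have s: "(SOME S. S \<in> F k \<and> psi k S x < 1) = S" using sel[OF assms(1,2) lt] .
  have "min 1 (2 - 2 * psi k S x) = 1" using assms(3) by simp
  moreover have ex: "\<exists>T\<in>F k. psi k T x < 1" using assms(2) lt by blast
  moreover have "j < n" "S \<in> F (Suc j)" using Suc assms(1,2) by auto
  then have "gam j S 1 = p k S" using gam_prop[of j S] Suc unfolding pathfinish_def by simp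
  ultimately show ?thesis using Suc s by (simp only: g.simps if_True)
qed

lemma g_cont: "k \<le> n \<Longrightarrow> continuous_on UNIV (g k)"
proof (induction k)
  case 0
  then show ?case by (simp add: g.simps)
next
  case (Suc k)
  have IH: "continuous_on UNIV (g k)" using Suc by simp
  have "\<exists>U. open U \<and> x0 \<in> U \<and> continuous_on U (g (Suc k))" for x0
  proof -
    obtain U where U: "open U" "x0 \<in> U"
      "\<forall>A\<in>F (Suc k). \<forall>B\<in>F (Suc k). U \<inter> {y. psi (Suc k) A y < 1} \<noteq> {} \<longrightarrow> U \<inter> {y. psi (Suc k) B y < 1} \<noteq> {} \<longrightarrow> A = B"
      using disc_psi[OF Suc.prems, of x0] by blast
    have "continuous_on U (g (Suc k))"
    proof (cases "\<exists>S\<in>F (Suc k). U \<inter> {y. psi (Suc k) S y < 1} \<noteq> {}")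
      case False
      have eq: "g (Suc k) y = g k y" if y: "y \<in> U" for y
      proof -
        have "\<not> (\<exists>T\<in>F (Suc k). psi (Suc k) T y < 1)" using False y by blast
        then show ?thesis by (simp only: g.simps if_False)
      qed
      have c: "continuous_on U (g k)" using IH continuous_on_subset by blast
      show ?thesis by (rule continuous_on_eq[OF c]) (rule eq[symmetric])
    next
      case True
      then obtain S where S: "S \<in> F (Suc k)" "U \<inter> {y. psi (Suc k) S y < 1} \<noteq> {}" by blast
      have kn: "k < n" "k \<le> n" using Suc.prems by auto
      have pp: "par k S \<in> F k \<and> S \<subseteq> par k S" using par_prop[OF kn(1) S(1)] .
      have gp: "path (gam k S) \<and> pathstart (gam k S) = p k (par k S) \<and> pathfinish (gam k S) = p (Suc k) S"
        using gam_prop[OF kn(1) S(1)] by blast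
      have ps: "continuous_on UNIV (psi (Suc k) S) \<and> (\<forall>x. 0 \<le> psi (Suc k) S x \<and> psi (Suc k) S x \<le> 1)"
        using psi_props[OF Suc.prems S(1)] by blast
      have pk: "continuous_on UNIV (psi k (par k S))"
        using psi_props[OF kn(2) conjunct1[OF pp]] by blast
      define h where "h y = (if 1 \<le> psi (Suc k) S y then g k y else gam k S (min 1 (2 - 2 * psi (Suc k) S y)))" for y
      have c2: "continuous_on UNIV (\<lambda>y. gam k S (min 1 (2 - 2 * psi (Suc k) S y)))"
      proof (rule continuous_on_compose2[of "{0..1}" "gam k S"])
        show "continuous_on {0..1} (gam k S)" using gp path_def by blast
        show "continuous_on UNIV (\<lambda>y. min 1 (2 - 2 * psi (Suc k) S y))"
          using ps by (intro continuous_intros) auto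
        show "(\<lambda>y. min 1 (2 - 2 * psi (Suc k) S y)) ` UNIV \<subseteq> {0..1}" using ps by (auto simp: min_def)
      qed
      have cl1: "closed {y. 1 \<le> psi (Suc k) S y}"
        using ps by (intro closed_Collect_le) auto
      have cl2: "closed {y. psi k (par k S) y \<le> 1/2}"
        using pk by (intro closed_Collect_le) auto
      have un: "{y. 1 \<le> psi (Suc k) S y} \<union> {y. psi k (par k S) y \<le> 1/2} = UNIV"
      proof -
        have "psi k (par k S) y \<le> 1/2" if "\<not> 1 \<le> psi (Suc k) S y" for y
        proof -
          have "min 1 (2 * psi k (par k S) y) \<le> psi (Suc k) S y" by (simp only: psi.simps max.cobounded2)
          then have "min 1 (2 * psi k (par k S) y) < 1" using that by linarith
          then show ?thesis by (simp add: min_def split: if_splits)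
        qed
        then show ?thesis by blast
      qed
      have "continuous_on ({y. 1 \<le> psi (Suc k) S y} \<union> {y. psi k (par k S) y \<le> 1/2}) h"
        unfolding h_def
      proof (rule continuous_on_cases[OF cl1 cl2])
        show "continuous_on {y. 1 \<le> psi (Suc k) S y} (g k)" using IH continuous_on_subset by blast
        show "continuous_on {y. psi k (par k S) y \<le> 1/2} (\<lambda>y. gam k S (min 1 (2 - 2 * psi (Suc k) S y)))"
          using c2 continuous_on_subset by blast
        show "\<forall>x. x \<in> {y. 1 \<le> psi (Suc k) S y} \<and> \<not> 1 \<le> psi (Suc k) S x \<or>
          x \<in> {y. psi k (par k S) y \<le> 1 / 2} \<and> 1 \<le> psi (Suc k) S x \<longrightarrow>
          g k x = gam k S (min 1 (2 - 2 * psi (Suc k) S x))"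
        proof (intro allI impI)
          fix x assume "x \<in> {y. 1 \<le> psi (Suc k) S y} \<and> \<not> 1 \<le> psi (Suc k) S x \<or>
            x \<in> {y. psi k (par k S) y \<le> 1 / 2} \<and> 1 \<le> psi (Suc k) S x"
          then have x1: "psi k (par k S) x \<le> 1/2" "1 \<le> psi (Suc k) S x" by auto
          have x: "psi k (par k S) x \<le> 1/2" "psi (Suc k) S x = 1" using x1 ps by (auto intro: antisym)
          have "g k x = p k (par k S)" using I5[OF kn(2) conjunct1[OF pp] x(1)] .
          moreover have "min 1 (2 - 2 * psi (Suc k) S x) = 0" using x by simp
          ultimately show "g k x = gam k S (min 1 (2 - 2 * psi (Suc k) S x))"
            using gp unfolding pathstart_def by simp
        qed
      qed
      then have hc: "continuous_on UNIV h" using un by simp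
      have eqh: "\<forall>y\<in>U. g (Suc k) y = h y"
      proof
        fix y assume y: "y \<in> U"
        show "g (Suc k) y = h y"
        proof (cases "psi (Suc k) S y < 1")
          case True
          have s: "(SOME S. S \<in> F (Suc k) \<and> psi (Suc k) S y < 1) = S" using sel[OF Suc.prems S(1) True] .
          have ex: "\<exists>T\<in>F (Suc k). psi (Suc k) T y < 1" using True S(1) by blast
          have "h y = gam k S (min 1 (2 - 2 * psi (Suc k) S y))" using True unfolding h_def by simp
          then show ?thesis by (simp only: g.simps ex s if_True)
        next
          case False
          have "\<not> (\<exists>T\<in>F (Suc k). psi (Suc k) T y < 1)"
          proof
            assume "\<exists>T\<in>F (Suc k). psi (Suc k) T y < 1"
            then obtain T where T: "T \<in> F (Suc k)" "psi (Suc k) T y < 1" by blast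
            have "U \<inter> {y. psi (Suc k) T y < 1} \<noteq> {}" using T y by blast
            then have "T = S" using U(3) S T(1) by blast
            then show False using T False by simp
          qed
          then have "g (Suc k) y = g k y" by (simp only: g.simps if_False)
          moreover have "h y = g k y" using False unfolding h_def by simp
          ultimately show ?thesis by simp
        qed
      qed
      have hcU: "continuous_on U h" using hc continuous_on_subset by blast
      show ?thesis by (rule continuous_on_eq[OF hcU]) (rule sym, erule bspec[OF eqh])
    qed
    then show ?thesis using U by blast
  qed
  then have "\<Union>{U. open U \<and> continuous_on U (g (Suc k))} = UNIV" by blast
  moreover have "continuous_on (\<Union>{U. open U \<and> continuous_on U (g (Suc k))}) (g (Suc k))"
    by (rule continuous_on_open_Union) auto
  ultimately show ?case by simp
qed

lemma g_step: assumes "1 \<le> k" "k < n" shows "dist (g (Suc k) x) (g k x) < 1 / 2 ^ (k + 2)"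
proof (cases "\<exists>S\<in>F (Suc k). psi (Suc k) S x < 1")
  case True
  define S where "S = (SOME S. S \<in> F (Suc k) \<and> psi (Suc k) S x < 1)"
  have "\<exists>S. S \<in> F (Suc k) \<and> psi (Suc k) S x < 1" using True by blast
  then have S0: "S \<in> F (Suc k) \<and> psi (Suc k) S x < 1" unfolding S_def by (rule someI_ex)
  then have S: "S \<in> F (Suc k)" "psi (Suc k) S x < 1" by auto
  have pp: "par k S \<in> F k \<and> S \<subseteq> par k S" using par_prop[OF assms(2) S(1)] .
  have gp: "path (gam k S) \<and> pathstart (gam k S) = p k (par k S) \<and> diameter (path_image (gam k S)) < 1 / 2 ^ (k + 2)"
    using gam_prop[OF assms(2) S(1)] assms(1) by blast
  have ps: "\<forall>x. 0 \<le> psi (Suc k) S x \<and> psi (Suc k) S x \<le> 1"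
    using psi_props[of "Suc k" S] assms S by simp
  have "psi k (par k S) x \<le> 1/2"
  proof -
    have "min 1 (2 * psi k (par k S) x) \<le> psi (Suc k) S x" by (simp only: psi.simps max.cobounded2)
    then have "min 1 (2 * psi k (par k S) x) < 1" using S(2) by linarith
    then show ?thesis by (simp add: min_def split: if_splits)
  qed
  then have "g k x = p k (par k S)" using I5[of k "par k S" x] pp assms by simp
  then have gk: "g k x = gam k S 0" using gp unfolding pathstart_def by simp
  define t where "t = min 1 (2 - 2 * psi (Suc k) S x)"
  have t: "t \<in> {0..1}" using ps unfolding t_def by (auto simp: min_def)
  have gs: "g (Suc k) x = gam k S t" using True unfolding t_def S_def by (simp only: g.simps if_True)
  have "dist (gam k S t) (gam k S 0) \<le> diameter (path_image (gam k S))"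
  proof (rule diameter_bounded_bound)
    show "bounded (path_image (gam k S))" using gp by (intro compact_imp_bounded compact_path_image) blast
    show "gam k S t \<in> path_image (gam k S)" using t unfolding path_image_def by (rule imageI)
    show "gam k S 0 \<in> path_image (gam k S)" unfolding path_image_def by (rule imageI) simp
  qed
  then show ?thesis using gk gs gp by simp
next
  case False
  have "g (Suc k) x = g k x" by (simp only: g.simps False if_False)
  then show ?thesis by simp
qed

lemma g_acc: "1 \<le> k \<Longrightarrow> k + m \<le> n \<Longrightarrow> dist (g (k + m) x) (g k x) \<le> 1 / 2 ^ (k + 1) - 1 / 2 ^ (k + 1 + m)"
proof (induction m)
  case 0
  then show ?case by simp
next
  case (Suc m)
  have "dist (g (k + Suc m) x) (g k x) \<le> dist (g (Suc (k + m)) x) (g (k + m) x) + dist (g (k + m) x) (g k x)"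
    using dist_triangle[of "g (Suc (k + m)) x" "g k x" "g (k + m) x"] by simp
  also have "\<dots> \<le> 1 / 2 ^ (k + m + 2) + (1 / 2 ^ (k + 1) - 1 / 2 ^ (k + 1 + m))"
  proof (rule add_mono)
    show "dist (g (Suc (k + m)) x) (g (k + m) x) \<le> 1 / 2 ^ (k + m + 2)"
      using g_step[of "k + m" x] Suc.prems by simp
    show "dist (g (k + m) x) (g k x) \<le> 1 / 2 ^ (k + 1) - 1 / 2 ^ (k + 1 + m)"
      using Suc by simp
  qed
  also have "\<dots> = 1 / 2 ^ (k + 1) - 1 / 2 ^ (k + 1 + Suc m)"
    by (simp add: field_simps)
  finally show ?case .
qed

end

theorem mainTheorem5:
  fixes f :: "'a::topological_space \<Rightarrow> 'b::metric_space"
    and n :: nat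
    and F :: "nat \<Rightarrow> 'a set set"
    and p :: "nat \<Rightarrow> 'a set \<Rightarrow> 'b"
  assumes n2: "n \<ge> 2"
    and sfd: "\<forall>k\<le>n. strictly_functionally_discrete (F k)"
    and A: "F 0 = {UNIV}"
    and B: "\<forall>k\<le>n. \<forall>S\<in>F k. \<exists>c < 1 / 2 ^ (k + 2). \<forall>x\<in>S. dist (f x) (p k S) \<le> c"
    and C: "\<forall>k<n. \<forall>S\<in>F (Suc k). \<exists>S'\<in>F k. S \<subseteq> S'"
    and D: "\<forall>S\<in>F 1. joined_by_arc (p 0 UNIV) (p 1 S)"
    and E: "\<forall>k\<in>{1..n-1}. \<forall>S\<in>F (Suc k). \<forall>S'\<in>F k. S \<subseteq> S' \<longrightarrow>
              joined_by_arc_diam_lt (p (Suc k) S) (p k S') (1 / 2 ^ (k + 2))"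
  shows "\<exists>g. continuous_on UNIV g \<and>
           (\<forall>k\<in>{1..n}. \<forall>x\<in>\<Union>(F k). dist (f x) (g x) < 1 / 2 ^ k)"
proof -
  have "\<forall>k. \<exists>\<phi> :: 'a set \<Rightarrow> 'a \<Rightarrow> real. k \<le> n \<longrightarrow> ((\<forall>A\<in>F k. continuous_on UNIV (\<phi> A) \<and> (\<forall>x. \<phi> A x \<in> {0..1}) \<and> A \<subseteq> \<phi> A -` {0}) \<and>
        (\<forall>x. \<exists>U. open U \<and> x \<in> U \<and>
           (\<forall>A\<in>F k. \<forall>B\<in>F k. U \<inter> \<phi> A -` {0..<1} \<noteq> {} \<longrightarrow> U \<inter> \<phi> B -` {0..<1} \<noteq> {} \<longrightarrow> A = B)))"
  proof
    fix k
    show "\<exists>\<phi> :: 'a set \<Rightarrow> 'a \<Rightarrow> real. k \<le> n \<longrightarrow> ((\<forall>A\<in>F k. continuous_on UNIV (\<phi> A) \<and> (\<forall>x. \<phi> A x \<in> {0..1}) \<and> A \<subseteq> \<phi> A -` {0}) \<and>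
        (\<forall>x. \<exists>U. open U \<and> x \<in> U \<and>
           (\<forall>A\<in>F k. \<forall>B\<in>F k. U \<inter> \<phi> A -` {0..<1} \<noteq> {} \<longrightarrow> U \<inter> \<phi> B -` {0..<1} \<noteq> {} \<longrightarrow> A = B)))"
    proof (cases "k \<le> n")
      case True
      then have "strictly_functionally_discrete (F k)" using sfd by blast
      then show ?thesis unfolding strictly_functionally_discrete_def
        by (rule ex_forward) (rule impI)
    next
      case False
      then show ?thesis by blast
    qed
  qed
  from choice[OF this] obtain phi :: "nat \<Rightarrow> 'a set \<Rightarrow> 'a \<Rightarrow> real" where phi: "\<forall>k. k \<le> n \<longrightarrow> ((\<forall>A\<in>F k. continuous_on UNIV (phi k A) \<and> (\<forall>x. phi k A x \<in> {0..1}) \<and> A \<subseteq> phi k A -` {0}) \<and>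
        (\<forall>x. \<exists>U. open U \<and> x \<in> U \<and>
           (\<forall>A\<in>F k. \<forall>B\<in>F k. U \<inter> phi k A -` {0..<1} \<noteq> {} \<longrightarrow> U \<inter> phi k B -` {0..<1} \<noteq> {} \<longrightarrow> A = B)))"
    ..
  interpret c: cons5 f n F p phi
    apply unfold_locales
          apply (rule n2)
     apply (intro allI impI)
     apply (rule conjunct1[OF phi[rule_format]])
     apply assumption
    apply (intro allI impI)
    apply (rule spec[OF conjunct2[OF phi[rule_format]]])
    apply assumption
       apply (rule A)
      apply (rule C)
     apply (rule D)
    apply (rule E)
    done
  show ?thesis
  proof (intro exI[of _ "c.g n"] conjI ballI)
    show "continuous_on UNIV (c.g n)" using c.g_cont by simp
    fix k x assume k: "k \<in> {1..n}" and x: "x \<in> \<Union>(F k)"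
    then obtain S where S: "S \<in> F k" "x \<in> S" by blast
    have kn: "k \<le> n" using k by simp
    obtain c where c: "c < 1 / 2 ^ (k + 2)" "dist (f x) (p k S) \<le> c" using B kn S by blast
    have "c.psi k S x = 0" using c.psi_props[OF kn S(1)] S(2) by blast
    then have gk: "c.g k x = p k S" using c.I5 k S by simp
    have "dist (c.g (k + (n - k)) x) (c.g k x) \<le> 1 / 2 ^ (k + 1) - 1 / 2 ^ (k + 1 + (n - k))"
      using c.g_acc[of k "n - k" x] k by simp
    moreover have e: "k + (n - k) = n" using k by simp
    ultimately have d: "dist (c.g n x) (p k S) \<le> 1 / 2 ^ (k + 1) - 1 / 2 ^ (k + 1 + (n - k))"
      unfolding gk by (simp only: e)
    have pos: "(0::real) \<le> 1 / 2 ^ (k + 1 + (n - k))" by simp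
    have "dist (c.g n x) (p k S) \<le> 1 / 2 ^ (k + 1)" using d pos by linarith
    then have "dist (f x) (c.g n x) < 1 / 2 ^ (k + 2) + 1 / 2 ^ (k + 1)"
      using c dist_triangle[of "f x" "c.g n x" "p k S"] by (simp add: dist_commute)
    also have "\<dots> < 1 / 2 ^ k" by (simp add: field_simps)
    finally show "dist (f x) (c.g n x) < 1 / 2 ^ k" .
  qed
qed

end
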